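(* Let $A=(a_1,\dots,a_p)$ and $B=(b_1,\dots,b_q)$ be finite lists of voids (notation in the context) ordered by nondecreasing start time, i.e. $S(a_1)\le S(a_2)\le\dots\le S(a_p)$ and $S(b_1)\le\dots\le S(b_q)$. Assume that at least one element of $A$ and at least one element of $B$ has finish time $+\infty$. Fix a real number $T_e$ and a required length $\ell>0$. Run the modified CEVF search: start with the pair $(a,b)=(a_1,b_1)$; while $L_{T_e}(a\cap b)<\ell$, replace $a=a_i$ by $a_{i+1}$ if $F(a)\le F(b)$, and otherwise replace $b=b_j$ by $b_{j+1}$; when $L_{T_e}(a\cap b)\ge \ell$, stop and output the pair $(a,b)$ (the "scheduling void" is $a\cap b$). Then: (i) the procedure never runs past the end of either list and terminates after inspecting at most $p+q-1$ pairs; (ii) the output pair $(a^*,b^* )$ is feasible, i.e. $L_{T_e}(a^*\cap b^* )\ge \ell$, and it is optimal: for every pair $(a_i,b_j)\in A\times B$ with $L_{T_e}(a_i\cap b_j)\ge\ell$ one has $S_{T_e}(a^*\cap b^* )\le S_{T_e}(a_i\cap b_j)$. In particular, in the network setting where $A=V^{Rx}$ is the set of all receiver voids (with $p\le MN+R$) and $B=V^G_x$ is the set of group voids of group $x$ (with $q\le N+1$), the algorithm finds the void with the earliest start time satisfying the length criterion in at most $N+MN+R$ steps, so its complexity is $O(MN)$ when $R,N\ll MN$.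
   Context: A void is a time interval $X$ with a start time $S(X)\in\mathbb{R}$ and a finish time $F(X)\in\mathbb{R}\cup\{+\infty\}$, $F(X)\ge S(X)$. For two voids $a,b$ and an earliest admissible time $T_e$, their (constrained) intersection $a\cap b$ has start $S_{T_e}(a\cap b)=\max(T_e,S(a),S(b))$, finish $F(a\cap b)=\min(F(a),F(b))$, and length $L_{T_e}(a\cap b)=F(a\cap b)-S_{T_e}(a\cap b)$ (which is $+\infty$ when both finish times are $+\infty$). A pair $(a,b)$ is feasible if $L_{T_e}(a\cap b)\ge \ell$, where $\ell=g/l+T_{grd}$ is the time needed to transmit the granted $g$ bytes at link rate $l$ plus a guard/tuning time $T_{grd}$. Network setting: an optical line terminal with $R$ receivers serves $M$ groups of $N$ optical network units each ($MN$ units in total). A receiver void is a maximal time interval in which no upstream transmission is scheduled on a given receiver; $V^{Rx}$ is the collection of receiver voids of all receivers, each receiver having one "horizon" void with finish time $+\infty$. A group void of group $x$ is a maximal interval during which no unit of group $x$ is scheduled to transmit; $V^G_x$ is their collection, including one horizon void with finish time $+\infty$. $T_e=t+rtt_{c,d}$ is the current time plus the round-trip time of the requesting unit. *)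

theory Defs
  imports Complex_Main "HOL-Library.Extended_Real"
begin

text \<open>A void is a pair (start, finish) with start a real number and finish in
  the extended reals (finish = \<infinity> for horizon voids).\<close>
type_synonym void = "real \<times> ereal"

definition vS :: "void \<Rightarrow> real" where "vS X = fst X"
definition vF :: "void \<Rightarrow> ereal" where "vF X = snd X"

definition valid_void :: "void \<Rightarrow> bool" where
  "valid_void X \<longleftrightarrow> ereal (vS X) \<le> vF X"

definition S_int :: "real \<Rightarrow> void \<Rightarrow> void \<Rightarrow> real" where
  "S_int Te a b = max Te (max (vS a) (vS b))"

definition F_int :: "void \<Rightarrow> void \<Rightarrow> ereal" where
  "F_int a b = min (vF a) (vF b)"

definition L_int :: "real \<Rightarrow> void \<Rightarrow> void \<Rightarrow> ereal" where
  "L_int Te a b = F_int a b - ereal (S_int Te a b)"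

definition feasible :: "real \<Rightarrow> real \<Rightarrow> void \<Rightarrow> void \<Rightarrow> bool" where
  "feasible Te l a b \<longleftrightarrow> L_int Te a b \<ge> ereal l"

text \<open>One step of the modified CEVF search on index pairs (0-based).
  If the current pair is feasible the search has stopped (fixed point).\<close>
definition cevf_step ::
  "void list \<Rightarrow> void list \<Rightarrow> real \<Rightarrow> real \<Rightarrow> nat \<times> nat \<Rightarrow> nat \<times> nat" where
  "cevf_step A B Te l ij =
     (let i = fst ij; j = snd ij in
      if feasible Te l (A ! i) (B ! j) then (i, j)
      else if vF (A ! i) \<le> vF (B ! j) then (Suc i, j)
      else (i, Suc j))"

definition cevf_state ::
  "void list \<Rightarrow> void list \<Rightarrow> real \<Rightarrow> real \<Rightarrow> nat \<Rightarrow> nat \<times> nat" where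
  "cevf_state A B Te l k = (cevf_step A B Te l ^^ k) (0, 0)"

end

theory Submission
  imports Defs
begin

lemma emono: "(x::ereal) \<le> y \<Longrightarrow> t \<le> s \<Longrightarrow> x - ereal s \<le> y - ereal t"
  by (cases x; cases y) auto
lemma advA: "\<not> feasible Te l a b \<Longrightarrow> vF a \<le> vF b \<Longrightarrow> vS b \<le> vS b' \<Longrightarrow> \<not> feasible Te l a b'"
  unfolding feasible_def L_int_def F_int_def S_int_def
proof -
  assume h: "\<not> ereal l \<le> min (vF a) (vF b) - ereal (max Te (max (vS a) (vS b)))" "vF a \<le> vF b" "vS b \<le> vS b'"
  have "min (vF a) (vF b') - ereal (max Te (max (vS a) (vS b'))) \<le> min (vF a) (vF b) - ereal (max Te (max (vS a) (vS b)))"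
    by (rule emono) (use h in auto)
  with h show "\<not> ereal l \<le> min (vF a) (vF b') - ereal (max Te (max (vS a) (vS b')))" by auto
qed
lemma advB: "\<not> feasible Te l a b \<Longrightarrow> vF b \<le> vF a \<Longrightarrow> vS a \<le> vS a' \<Longrightarrow> \<not> feasible Te l a' b"
  unfolding feasible_def L_int_def F_int_def S_int_def
proof -
  assume h: "\<not> ereal l \<le> min (vF a) (vF b) - ereal (max Te (max (vS a) (vS b)))" "vF b \<le> vF a" "vS a \<le> vS a'"
  have "min (vF a') (vF b) - ereal (max Te (max (vS a') (vS b))) \<le> min (vF a) (vF b) - ereal (max Te (max (vS a) (vS b)))"
    by (rule emono) (use h in auto)
  with h show "\<not> ereal l \<le> min (vF a') (vF b) - ereal (max Te (max (vS a') (vS b)))" by auto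
qed
lemma infeas: "vF a = \<infinity> \<Longrightarrow> vF b = \<infinity> \<Longrightarrow> feasible Te l a b"
  unfolding feasible_def L_int_def F_int_def by simp

theorem theorem1:
  fixes A B :: "void list" and Te l :: real
  assumes validA: "\<forall>a\<in>set A. valid_void a"
    and validB: "\<forall>b\<in>set B. valid_void b"
    and sortedA: "sorted (map vS A)"
    and sortedB: "sorted (map vS B)"
    and horA: "\<exists>a\<in>set A. vF a = \<infinity>"
    and horB: "\<exists>b\<in>set B. vF b = \<infinity>"
    and lpos: "l > 0"
  shows "\<exists>k.
     k + 1 \<le> length A + length B - 1
   \<and> (\<forall>m\<le>k. fst (cevf_state A B Te l m) < length A \<and> snd (cevf_state A B Te l m) < length B)
   \<and> (\<forall>m<k. \<not> feasible Te l (A ! fst (cevf_state A B Te l m)) (B ! snd (cevf_state A B Te l m)))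
   \<and> (let i = fst (cevf_state A B Te l k); j = snd (cevf_state A B Te l k) in
        feasible Te l (A ! i) (B ! j)
      \<and> (\<forall>i'<length A. \<forall>j'<length B. feasible Te l (A ! i') (B ! j') \<longrightarrow>
            S_int Te (A ! i) (B ! j) \<le> S_int Te (A ! i') (B ! j')))
   \<and> (\<forall>M N R :: nat. length A \<le> M * N + R \<and> length B \<le> N + 1 \<longrightarrow> k + 1 \<le> N + M * N + R)"
proof -
  define p where "p = length A"
  define q where "q = length B"
  obtain hA where hA: "hA < p" "vF (A ! hA) = \<infinity>" using horA unfolding p_def by (auto simp: in_set_conv_nth)
  obtain hB where hB: "hB < q" "vF (B ! hB) = \<infinity>" using horB unfolding q_def by (auto simp: in_set_conv_nth)
  define inv where "inv = (\<lambda>(i::nat,j::nat). i \<le> hA \<and> j \<le> hB \<and>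
      (\<forall>i'<p. \<forall>j'<q. (i' < i \<or> j' < j) \<longrightarrow> \<not> feasible Te l (A ! i') (B ! j')))"
  let ?st = "cevf_state A B Te l"
  have stS: "?st (Suc m) = cevf_step A B Te l (?st m)" for m
    by (simp add: cevf_state_def)
  have st0: "?st 0 = (0,0)" by (simp add: cevf_state_def)
  have step: "inv (step_i, step_j) \<and> fst (cevf_step A B Te l (i,j)) + snd (cevf_step A B Te l (i,j)) = Suc (i+j)
     \<and> inv (cevf_step A B Te l (i,j))"
    if I: "inv (i,j)" and nf: "\<not> feasible Te l (A ! i) (B ! j)" and dummy: "inv (step_i, step_j)" for i j step_i step_j
  proof -
    from I have ih: "i \<le> hA" "j \<le> hB" and old: "\<forall>i'<p. \<forall>j'<q. (i' < i \<or> j' < j) \<longrightarrow> \<not> feasible Te l (A ! i') (B ! j')"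
      unfolding inv_def by auto
    have ip: "i < p" using ih hA by auto
    have jq: "j < q" using ih hB by auto
    show ?thesis
    proof (cases "vF (A ! i) \<le> vF (B ! j)")
      case True
      have ne: "i \<noteq> hA"
      proof
        assume "i = hA"
        then have "vF (B ! j) = \<infinity>" using True hA by auto
        with \<open>i = hA\<close> hA nf infeas show False by blast
      qed
      have new: "\<forall>j'<q. \<not> feasible Te l (A ! i) (B ! j')"
      proof (intro allI impI)
        fix j' assume "j' < q"
        show "\<not> feasible Te l (A ! i) (B ! j')"
        proof (cases "j' < j")
          case True then show ?thesis using old ip \<open>j' < q\<close> by auto
        next
          case False
          have "vS (B ! j) \<le> vS (B ! j')"
            using sorted_nth_mono[OF sortedB, of j j'] False \<open>j' < q\<close> unfolding q_def by auto
          then show ?thesis using advA[OF nf True] by blast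
        qed
      qed
      have "cevf_step A B Te l (i,j) = (Suc i, j)" using nf True by (simp add: cevf_step_def)
      moreover have "inv (Suc i, j)" unfolding inv_def using ih ne old new
        by (auto simp: less_Suc_eq)
      ultimately show ?thesis using dummy by simp
    next
      case False
      then have F: "vF (B ! j) \<le> vF (A ! i)" by auto
      have ne: "j \<noteq> hB"
      proof
        assume "j = hB"
        then have "vF (A ! i) = \<infinity>" using F hB by auto
        with \<open>j = hB\<close> hB nf infeas show False by blast
      qed
      have new: "\<forall>i'<p. \<not> feasible Te l (A ! i') (B ! j)"
      proof (intro allI impI)
        fix i' assume "i' < p"
        show "\<not> feasible Te l (A ! i') (B ! j)"
        proof (cases "i' < i")
          case True then show ?thesis using old jq \<open>i' < p\<close> by auto
        next
          case False
          have "vS (A ! i) \<le> vS (A ! i')"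
            using sorted_nth_mono[OF sortedA, of i i'] False \<open>i' < p\<close> unfolding p_def by auto
          then show ?thesis using advB[OF nf F] by blast
        qed
      qed
      have "cevf_step A B Te l (i,j) = (i, Suc j)" using nf False by (simp add: cevf_step_def)
      moreover have "inv (i, Suc j)" unfolding inv_def using ih ne old new
        by (auto simp: less_Suc_eq)
      ultimately show ?thesis using dummy by simp
    qed
  qed
  have run: "(\<forall>m'<m. \<not> feasible Te l (A ! fst (?st m')) (B ! snd (?st m'))) \<longrightarrow>
      inv (?st m) \<and> fst (?st m) + snd (?st m) = m" for m
  proof (induction m)
    case 0 show ?case by (simp add: st0 inv_def)
  next
    case (Suc m)
    show ?case
    proof
      assume H: "\<forall>m'<Suc m. \<not> feasible Te l (A ! fst (?st m')) (B ! snd (?st m'))"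
      then have I: "inv (?st m)" and s: "fst (?st m) + snd (?st m) = m" using Suc.IH by auto
      obtain i j where ij: "?st m = (i,j)" by (cases "?st m")
      have nf: "\<not> feasible Te l (A ! i) (B ! j)" using H ij by (metis fst_conv snd_conv lessI)
      from step[OF I[unfolded ij] nf I[unfolded ij]] s ij show "inv (?st (Suc m)) \<and> fst (?st (Suc m)) + snd (?st (Suc m)) = Suc m"
        by (simp add: stS)
    qed
  qed
  have invB: "i + j \<le> hA + hB \<and> i < p \<and> j < q" if "inv (i,j)" for i j
    using that hA hB unfolding inv_def by auto
  have ex: "\<exists>m. feasible Te l (A ! fst (?st m)) (B ! snd (?st m))"
  proof (rule ccontr)
    assume "\<not> ?thesis"
    then have "inv (?st (Suc (hA+hB))) \<and> fst (?st (Suc (hA+hB))) + snd (?st (Suc (hA+hB))) = Suc (hA+hB)"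
      using run by blast
    then show False using invB by (metis prod.collapse not_less_eq_eq order_refl)
  qed
  define k where "k = (LEAST m. feasible Te l (A ! fst (?st m)) (B ! snd (?st m)))"
  have fk: "feasible Te l (A ! fst (?st k)) (B ! snd (?st k))"
    unfolding k_def using ex by (rule LeastI_ex)
  have bef: "\<forall>m<k. \<not> feasible Te l (A ! fst (?st m)) (B ! snd (?st m))"
    unfolding k_def using not_less_Least by blast
  have runm: "inv (?st m) \<and> fst (?st m) + snd (?st m) = m" if "m \<le> k" for m
    using run[of m] bef that by auto
  have Ik: "inv (?st k)" and sk: "fst (?st k) + snd (?st k) = k" using runm by auto
  have kb: "k \<le> hA + hB" using invB[of "fst (?st k)" "snd (?st k)"] Ik sk by simp
  have k1: "k + 1 \<le> length A + length B - 1" using kb hA hB unfolding p_def q_def by linarith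
  have bnds: "\<forall>m\<le>k. fst (?st m) < length A \<and> snd (?st m) < length B"
    using runm invB unfolding p_def q_def by (metis prod.collapse)
  have opt: "\<forall>i'<length A. \<forall>j'<length B. feasible Te l (A ! i') (B ! j') \<longrightarrow>
            S_int Te (A ! fst (?st k)) (B ! snd (?st k)) \<le> S_int Te (A ! i') (B ! j')"
  proof (intro allI impI)
    fix i' j' assume a: "i' < length A" "j' < length B" "feasible Te l (A ! i') (B ! j')"
    obtain i j where ij: "?st k = (i,j)" by (cases "?st k")
    have "i \<le> i' \<and> j \<le> j'" proof -
      have "\<forall>i'<p. \<forall>j'<q. (i' < i \<or> j' < j) \<longrightarrow> \<not> feasible Te l (A ! i') (B ! j')"
        using Ik ij unfolding inv_def by simp
      then show ?thesis using a unfolding p_def q_def by (meson not_le)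
    qed
    moreover have "i < length A" "j < length B" using invB Ik ij unfolding p_def q_def by auto
    ultimately have "vS (A ! i) \<le> vS (A ! i')" "vS (B ! j) \<le> vS (B ! j')"
      using sorted_nth_mono[OF sortedA, of i i'] sorted_nth_mono[OF sortedB, of j j'] a by auto
    then show "S_int Te (A ! fst (?st k)) (B ! snd (?st k)) \<le> S_int Te (A ! i') (B ! j')"
      using ij by (auto simp: S_int_def)
  qed
  have last: "\<forall>M N R :: nat. length A \<le> M * N + R \<and> length B \<le> N + 1 \<longrightarrow> k + 1 \<le> N + M * N + R"
    using k1 by auto
  show ?thesis
    apply (rule exI[of _ k])
    using k1 bnds bef fk opt last by (simp add: Let_def)
qed

end
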